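(* ${\sf MBRev}(\mathcal D_{ERC}(H))=O(\log\log H)$ as $H\to\infty$.
   Context: $\mathcal D_{ERC}(H)$ (equal revenue curve truncated at $H$) is the distribution on $[1,H]$ with $\Pr[v\ge t]=1/t$ for $t\in[1,H]$, i.e. density $q(v)=1/v^2$ on $[1,H)$ and an atom of mass $1/H$ at $H$. For a distribution with density $q$ on $[1,H]$ the mean-based revenue is ${\sf MBRev}=\sup_{x}\int_1^H q(v)\big(v\,x(v)-\sup_{1\le w<v}(v-w)x(w)\big)\,dv$ (plus the contribution $\Pr[H]\cdot(Hx(H)-\sup_{w<H}(H-w)x(w))$ of the atom), where the supremum is over functions $x:[1,H]\to[0,1]$. *)

theory Defs
  imports "HOL-Analysis.Analysis"
begin

definition mb_pen :: "(real \<Rightarrow> real) \<Rightarrow> real \<Rightarrow> real" where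
  "mb_pen x v = (if 1 < v then Sup {(v - w) * x w | w. 1 \<le> w \<and> w < v} else 0)"

text \<open>Integrand: density 1/v^2 of the truncated equal revenue curve on [1,H).\<close>
definition erc_integrand :: "(real \<Rightarrow> real) \<Rightarrow> real \<Rightarrow> real" where
  "erc_integrand x v = (1 / v^2) * (v * x v - mb_pen x v)"

text \<open>Mean-based revenue of allocation x on D_ERC(H): continuous part plus atom 1/H at H.\<close>
definition erc_mb_rev :: "real \<Rightarrow> (real \<Rightarrow> real) \<Rightarrow> real" where
  "erc_mb_rev H x = (LINT v:{1..<H}|lborel. erc_integrand x v)
      + (1 / H) * (H * x H - mb_pen x H)"

definition erc_feasible :: "real \<Rightarrow> (real \<Rightarrow> real) \<Rightarrow> bool" where
  "erc_feasible H x \<longleftrightarrow> (\<forall>v\<in>{1..H}. 0 \<le> x v \<and> x v \<le> 1)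
      \<and> set_integrable lborel {1..<H} (erc_integrand x)"

definition MBRev_ERC :: "real \<Rightarrow> ereal" where
  "MBRev_ERC H = (SUP x\<in>{x. erc_feasible H x}. ereal (erc_mb_rev H x))"

end

theory Submission
  imports Defs
begin

lemma pen_bdd:
  fixes x :: "real \<Rightarrow> real"
  assumes hx: "\<forall>v\<in>{1..H}. 0 \<le> x v \<and> x v \<le> 1" and v: "v \<le> H"
  shows "bdd_above {(v - w) * x w | w. 1 \<le> w \<and> w < v}"
  unfolding bdd_above_def
proof (intro exI[of _ "v - 1"] ballI)
  fix y assume "y \<in> {(v - w) * x w | w. 1 \<le> w \<and> w < v}"
  then obtain w where y: "y = (v - w) * x w" "1 \<le> w" "w < v" by blast
  have "x w \<le> 1" "0 \<le> x w" using hx[rule_format, of w] y v by auto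
  then have "(v - w) * x w \<le> (v - w)" using y by (intro mult_left_le) auto
  then show "y \<le> v - 1" using y by linarith
qed

lemma pen_ge:
  fixes x :: "real \<Rightarrow> real"
  assumes hx: "\<forall>v\<in>{1..H}. 0 \<le> x v \<and> x v \<le> 1" and v: "v \<le> H" and w: "1 \<le> w" "w < v"
  shows "(v - w) * x w \<le> mb_pen x v"
proof -
  have "1 < v" using w by simp
  then show ?thesis unfolding mb_pen_def
    using cSup_upper[OF _ pen_bdd[OF hx v]] w by auto
qed

lemma pen_nonneg:
  fixes x :: "real \<Rightarrow> real"
  assumes hx: "\<forall>v\<in>{1..H}. 0 \<le> x v \<and> x v \<le> 1" and v: "v \<le> H"
  shows "0 \<le> mb_pen x v"
proof (cases "1 < v")
  case True
  have "(v - 1) * x 1 \<le> mb_pen x v" using pen_ge[OF hx v, of 1] True by simp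
  moreover have "0 \<le> (v - 1) * x 1" using hx True v by auto
  ultimately show ?thesis by linarith
qed (simp add: mb_pen_def)

lemma pen_le:
  fixes x :: "real \<Rightarrow> real"
  assumes hx: "\<forall>v\<in>{1..H}. 0 \<le> x v \<and> x v \<le> 1" and v: "v \<le> H" "1 \<le> v"
  shows "mb_pen x v \<le> v"
proof (cases "1 < v")
  case True
  have "Sup {(v - w) * x w | w. 1 \<le> w \<and> w < v} \<le> v"
  proof (rule cSup_least)
    show "{(v - w) * x w | w. 1 \<le> w \<and> w < v} \<noteq> {}" using True by auto
  next
    fix y assume "y \<in> {(v - w) * x w | w. 1 \<le> w \<and> w < v}"
    then obtain w where y: "y = (v - w) * x w" "1 \<le> w" "w < v" by blast
    have "x w \<le> 1" "0 \<le> x w" using hx[rule_format, of w] y v by auto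
    then have "(v - w) * x w \<le> (v - w)" using y by (intro mult_left_le) auto
    then show "y \<le> v" using y by linarith
  qed
  then show ?thesis using True by (simp add: mb_pen_def)
qed (use v in \<open>simp add: mb_pen_def\<close>)

lemma pen_mono:
  fixes x :: "real \<Rightarrow> real"
  assumes hx: "\<forall>v\<in>{1..H}. 0 \<le> x v \<and> x v \<le> 1" and u: "1 < u" "u \<le> u'" "u' \<le> H"
  shows "mb_pen x u / u \<le> mb_pen x u' / u'"
proof -
  have "Sup {(u - w) * x w | w. 1 \<le> w \<and> w < u} \<le> u / u' * mb_pen x u'"
  proof (rule cSup_least)
    show "{(u - w) * x w | w. 1 \<le> w \<and> w < u} \<noteq> {}" using u by auto
  next
    fix y assume "y \<in> {(u - w) * x w | w. 1 \<le> w \<and> w < u}"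
    then obtain w where y: "y = (u - w) * x w" "1 \<le> w" "w < u" by blast
    have x: "x w \<le> 1" "0 \<le> x w" using hx[rule_format, of w] y u by auto
    have "(u' - w) * x w \<le> mb_pen x u'" using pen_ge[OF hx u(3), of w] y u by simp
    then have "u / u' * ((u' - w) * x w) \<le> u / u' * mb_pen x u'" using u
      by (intro mult_left_mono) auto
    moreover have "(u - w) * x w \<le> u / u' * ((u' - w) * x w)"
    proof -
      have "(u - w) \<le> u / u' * (u' - w)" using u y by (simp add: field_simps)
      then show ?thesis using x by (metis mult.assoc mult_right_mono)
    qed
    ultimately show "y \<le> u / u' * mb_pen x u'" using y by linarith
  qed
  then have "mb_pen x u \<le> u / u' * mb_pen x u'" using u by (simp add: mb_pen_def)
  then show ?thesis using u by (simp add: field_simps)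
qed

lemma int_inv:
  fixes a b :: real assumes "0 < a" "a \<le> b"
  shows "integrable lborel (\<lambda>v. indicator {a..b} v * (1/v))"
    and "(\<integral>v. indicator {a..b} v * (1/v) \<partial>lborel) = ln b - ln a"
proof -
  have c: "continuous_on {a..b} (\<lambda>v::real. 1/v)" using assms
    by (intro continuous_intros) auto
  show "integrable lborel (\<lambda>v. indicator {a..b} v * (1/v))"
    using borel_integrable_atLeastAtMost'[OF c] by (simp add: set_integrable_def mult.commute)
  have "(LBINT v=a..b. 1/v) = ln b - ln a"
  proof (rule interval_integral_FTC_finite)
    show "continuous_on {min a b..max a b} (\<lambda>v::real. 1/v)" using assms c by simp
    fix v assume "min a b \<le> v" "v \<le> max a b"
    then have "0 < v" using assms by simp
    then show "(ln has_vector_derivative 1 / v) (at v within {min a b..max a b})"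
      by (auto intro!: derivative_eq_intros simp: has_real_derivative_iff_has_vector_derivative[symmetric])
  qed
  then show "(\<integral>v. indicator {a..b} v * (1/v) \<partial>lborel) = ln b - ln a"
    using interval_integral_Icc[OF assms(2), of "\<lambda>v. 1/v"]
    by (simp add: set_lebesgue_integral_def)
qed

lemma main_bound:
  fixes x :: "real \<Rightarrow> real" and H K :: real
  assumes K: "1 < K" "K \<le> H" and fe: "erc_feasible H x"
  shows "erc_mb_rev H x \<le> (ln H - ln K) / (K - 1) + ln K + 1"
proof -
  have hx: "\<forall>v\<in>{1..H}. 0 \<le> x v \<and> x v \<le> 1" using fe by (simp add: erc_feasible_def)
  have intE: "integrable lborel (\<lambda>v. indicator {1..<H} v * erc_integrand x v)"
    using fe by (simp add: erc_feasible_def set_integrable_def)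
  have H1: "1 < H" using K by linarith
  define c where "c v = max 1 (min H v)" for v
  define G where "G v = mb_pen x (c v) / c v" for v
  have c1: "1 \<le> c v" "c v \<le> H" for v using H1 by (auto simp: c_def)
  have G0: "0 \<le> G v" for v using pen_nonneg[OF hx c1(2)] c1(1)[of v] by (simp add: G_def)
  have G1: "G v \<le> 1" for v using pen_le[OF hx c1(2) c1(1)] c1(1)[of v] by (simp add: G_def)
  have Gv: "G v = mb_pen x v / v" if "1 \<le> v" "v \<le> H" for v
    using that by (simp add: G_def c_def)
  have "mono G"
  proof (rule monoI)
    fix u u' :: real assume "u \<le> u'"
    then have cu: "c u \<le> c u'" by (auto simp: c_def)
    show "G u \<le> G u'"
    proof (cases "c u = 1")
      case True
      then show ?thesis using G0[of u'] by (simp add: G_def mb_pen_def)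
    next
      case False
      then have "1 < c u" using c1(1)[of u] by simp
      then show ?thesis unfolding G_def using pen_mono[OF hx _ cu c1(2)] by simp
    qed
  qed
  then have Gm: "G \<in> borel_measurable borel" by (rule borel_measurable_mono)
  define P where "P v = K/(K-1) * (indicator {1..H/K} v * (G (K * v) / v))
     + indicator {H/K..H} v * (1/v) - indicator {K..H} v * (G v / v)" for v
  have HK: "1 \<le> H/K" "H/K \<le> H" "H / K < H" using K H1 by (auto simp: field_simps)
  have pw: "indicator {1..<H} v * erc_integrand x v \<le> P v" for v
  proof (cases "v \<in> {1..<H}")
    case True
    then have v: "1 \<le> v" "v < H" by auto
    have e: "erc_integrand x v = x v / v - G v / v"
      using v Gv[of v] by (simp add: erc_integrand_def power2_eq_square field_simps)
    have i0: "indicator {1..<H} v * erc_integrand x v = x v / v - G v / v"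
      using True e by simp
    have t3: "indicator {K..H} v * (G v / v) \<le> G v / v"
      using G0[of v] v by (simp add: indicator_def)
    have t2: "0 \<le> indicator {H/K..H} v * (1/v)" using v by simp
    have t1: "0 \<le> K/(K-1) * (indicator {1..H/K} v * (G (K * v) / v))"
      using K v G0[of "K * v"] by simp
    show ?thesis
    proof (cases "v \<le> H/K")
      case True
      have KvH: "K * v \<le> H" using True K by (simp add: field_simps)
      have "K * 1 \<le> K * v" using K v by (intro mult_left_mono) auto
      then have "1 < K * v" using K by linarith
      have "(K* v - v) * x v \<le> mb_pen x (K * v)"
        using pen_ge[OF hx KvH, of v] v K by simp
      moreover have "mb_pen x (K * v) = G (K * v) * (K * v)"
      proof -
        have "K \<noteq> 0" "v \<noteq> 0" using K v by auto
        then show ?thesis using Gv[of "K * v"] KvH \<open>1 < K * v\<close> by simp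
      qed
      ultimately have r1: "(K * v - v) * x v \<le> G (K * v) * (K * v)" by linarith
      have r2: "(K * v - v) * x v = ((K - 1) * x v) * v" by (simp add: algebra_simps)
      have r3: "G (K * v) * (K * v) = (G (K * v) * K) * v" by (simp add: algebra_simps)
      have "((K - 1) * x v) * v \<le> (G (K * v) * K) * v" using r1 unfolding r2 r3 .
      then have r4: "(K - 1) * x v \<le> G (K * v) * K"
        by (rule mult_right_le_imp_le) (use v in linarith)
      have K0: "0 < K - 1" using K by linarith
      have r5: "x v * (K - 1) \<le> G (K * v) * K" using r4 by (simp only: mult.commute)
      have "x v \<le> (G (K * v) * K) / (K - 1)"
        using r5 pos_le_divide_eq[OF K0] by blast
      also have "\<dots> = K/(K-1) * G (K * v)" by simp
      finally have xv: "x v \<le> K/(K-1) * G (K * v)" .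
      have "x v / v \<le> (K/(K-1) * G (K * v)) / v" using v xv
        by (intro divide_right_mono) auto
      also have "\<dots> = K/(K-1) * (indicator {1..H/K} v * (G (K * v) / v))" using True v by simp
      finally have "x v / v \<le> K/(K-1) * (indicator {1..H/K} v * (G (K * v) / v))" .
      then show ?thesis unfolding P_def i0 using t2 t3 by linarith
    next
      case False
      have "x v \<le> 1" using hx v by auto
      then have "x v / v \<le> 1 / v" using v by (intro divide_right_mono) auto
      moreover have "indicator {H/K..H} v * (1 / v) = 1 / v" using False v by simp
      ultimately show ?thesis unfolding P_def i0 using t1 t3 by linarith
    qed
  next
    case False
    then have l: "indicator {1..<H} v * erc_integrand x v = 0" by simp
    show ?thesis
    proof (cases "v = H")
      case True
      have a: "indicator {1..H/K} v * (G (K * v) / v) = 0" using True HK by simp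
      have b: "indicator {H/K..H} v * (1/v) = 1 / v" using True HK by simp
      have c: "indicator {K..H} v * (G v / v) = G v / v" using True K by simp
      have "G v / v \<le> 1 / v" using G1[of v] True H1 by (intro divide_right_mono) auto
      then show ?thesis unfolding P_def l a b c by linarith
    next
      case vH: False
      then have "v \<notin> {K..H}" using False K by auto
      then have a: "indicator {K..H} v * (G v / v) = 0" by simp
      have b: "0 \<le> K/(K-1) * (indicator {1..H/K} v * (G (K * v) / v))"
        using K G0[of "K * v"] by (simp add: indicator_def)
      have c: "0 \<le> indicator {H/K..H} v * (1/v)"
        using HK by (simp add: indicator_def)
      show ?thesis unfolding P_def l a using b c by linarith
    qed
  qed
  have HK0: "0 < H / K" using HK by linarith
  note i1 = int_inv[OF zero_less_one HK(1)] and i2 = int_inv[OF HK0 HK(2)]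
    and i3 = int_inv[OF order_less_trans[OF zero_less_one K(1)] K(2)]
  have iA: "integrable lborel (\<lambda>v. indicator {1..H/K} v * (G (K * v) / v))"
  proof (rule Bochner_Integration.integrable_bound[OF i1(1)])
    have GKm: "(\<lambda>v. G (K * v)) \<in> borel_measurable borel"
      by (rule measurable_compose[OF _ Gm]) simp
    show "(\<lambda>v. indicator {1..H/K} v * (G (K * v) / v)) \<in> borel_measurable lborel"
      unfolding measurable_lborel2
      by (intro borel_measurable_times borel_measurable_divide GKm borel_measurable_indicator) auto
    show "AE v in lborel. norm (indicator {1..H/K} v * (G (K * v) / v)) \<le> norm (indicator {1..H/K} v * (1 / v))"
    proof (intro AE_I2)
      fix v show "norm (indicator {1..H/K} v * (G (K * v) / v)) \<le> norm (indicator {1..H/K} v * (1 / v))"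
      proof (cases "v \<in> {1..H/K}")
        case True
        then have v: "1 \<le> v" by simp
        have "0 \<le> G (K * v) / v" using G0[of "K * v"] v by simp
        moreover have "G (K * v) / v \<le> 1 / v" using G1[of "K * v"] v by (intro divide_right_mono) auto
        ultimately show ?thesis using True v by simp
      qed simp
    qed
  qed
  have iB: "integrable lborel (\<lambda>v. indicator {K..H} v * (G v / v))"
  proof (rule Bochner_Integration.integrable_bound[OF i3(1)])
    show "(\<lambda>v. indicator {K..H} v * (G v / v)) \<in> borel_measurable lborel"
      unfolding measurable_lborel2
      by (intro borel_measurable_times borel_measurable_divide Gm borel_measurable_indicator) auto
    show "AE v in lborel. norm (indicator {K..H} v * (G v / v)) \<le> norm (indicator {K..H} v * (1 / v))"
    proof (intro AE_I2)
      fix v show "norm (indicator {K..H} v * (G v / v)) \<le> norm (indicator {K..H} v * (1 / v))"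
      proof (cases "v \<in> {K..H}")
        case True
        then have v: "1 \<le> v" using K by simp
        have "0 \<le> G v / v" using G0[of v] v by simp
        moreover have "G v / v \<le> 1 / v" using G1[of v] v by (intro divide_right_mono) auto
        ultimately show ?thesis using True v by simp
      qed simp
    qed
  qed
  have iP: "integrable lborel P"
    unfolding P_def
    by (intro Bochner_Integration.integrable_diff Bochner_Integration.integrable_add
        integrable_mult_right iA iB i2(1))
  have AB: "(\<integral>v. indicator {1..H/K} v * (G (K * v) / v) \<partial>lborel)
       = (\<integral>v. indicator {K..H} v * (G v / v) \<partial>lborel)" (is "?A = ?B")
  proof -
    have "?B = \<bar>K\<bar> *\<^sub>R (\<integral>v. indicator {K..H} (0 + K * v) * (G (0 + K * v) / (0 + K * v)) \<partial>lborel)"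
      using K by (intro lborel_integral_real_affine) auto
    also have "\<dots> = K * (\<integral>v. indicator {K..H} (K * v) * (G (K * v) / (K * v)) \<partial>lborel)"
    proof -
      have Kabs: "\<bar>K\<bar> = K" using K by simp
      show ?thesis by (simp only: add_0_left Kabs real_scaleR_def)
    qed
    also have "\<dots> = (\<integral>v. K * (indicator {K..H} (K * v) * (G (K * v) / (K * v))) \<partial>lborel)"
      by (rule integral_mult_right_zero[symmetric])
    also have "\<dots> = ?A"
    proof (intro Bochner_Integration.integral_cong refl)
      fix v
      have "indicator {K..H} (K * v) = (indicator {1..H/K} v :: real)"
        using K by (simp add: indicator_def field_simps)
      then show "K * (indicator {K..H} (K * v) * (G (K * v) / (K * v))) = indicator {1..H/K} v * (G (K * v) / v)"
        using K by simp
    qed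
    finally show ?thesis by simp
  qed
  have Ble: "?B \<le> ln H - ln K"
  proof -
    have "?B \<le> (\<integral>v. indicator {K..H} v * (1 / v) \<partial>lborel)"
      using G1 K by (intro integral_mono[OF iB i3(1)]) (auto simp: indicator_def divide_right_mono)
    then show ?thesis using i3(2) K by simp
  qed
  have "(\<integral>v. P v \<partial>lborel) = K/(K-1) * ?A + (ln H - ln (H/K)) - ?B"
    unfolding P_def
    by (simp only: Bochner_Integration.integral_diff[OF Bochner_Integration.integrable_add[OF
          integrable_mult_right[OF iA] i2(1)] iB]
        Bochner_Integration.integral_add[OF integrable_mult_right[OF iA] i2(1)]
        integral_mult_right_zero i2(2))
  also have "ln H - ln (H/K) = ln K" using K H1 by (simp add: ln_div)
  finally have IP: "(\<integral>v. P v \<partial>lborel) = ?B / (K - 1) + ln K"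
    using AB K by (simp add: field_simps)
  have "(\<integral>v. indicator {1..<H} v * erc_integrand x v \<partial>lborel) \<le> (\<integral>v. P v \<partial>lborel)"
    using pw by (intro integral_mono[OF intE iP])
  also have "\<dots> \<le> (ln H - ln K) / (K - 1) + ln K"
    unfolding IP using Ble K by (simp add: divide_right_mono)
  finally have I: "(LINT v:{1..<H}|lborel. erc_integrand x v) \<le> (ln H - ln K) / (K - 1) + ln K"
    by (simp add: set_lebesgue_integral_def)
  have "(1 / H) * (H * x H - mb_pen x H) \<le> 1"
  proof -
    have "x H \<le> 1" using hx H1 by auto
    moreover have "0 \<le> mb_pen x H" using pen_nonneg[OF hx, of H] by simp
    moreover have "(1 / H) * (H * x H - mb_pen x H) = x H - mb_pen x H / H"
      using H1 by (simp add: field_simps)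
    moreover have "0 \<le> mb_pen x H / H" using \<open>0 \<le> mb_pen x H\<close> H1 by simp
    ultimately show ?thesis by linarith
  qed
  then show ?thesis using I unfolding erc_mb_rev_def by linarith
qed

theorem theoremC7:
  shows "\<exists>C H0. \<forall>H\<ge>H0. MBRev_ERC H \<le> ereal (C * ln (ln H))"
proof (intro exI allI impI)
  fix H :: real assume H: "exp (exp 1) \<le> H"
  define K where "K = ln H"
  have e2: "2 \<le> exp (1::real)" using exp_ge_add_one_self[of 1] by simp
  have Hpos: "0 < H" using H exp_gt_zero[of "exp 1"] by linarith
  have "ln (exp (exp 1)) \<le> ln H" using H Hpos by (subst ln_le_cancel_iff) auto
  then have Ke: "exp 1 \<le> K" unfolding K_def by simp
  have K1: "1 < K" "2 \<le> K" using Ke e2 by linarith+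
  have KH: "K \<le> H" unfolding K_def using ln_less_self[OF Hpos] by linarith
  have "ln (exp 1) \<le> ln K" using Ke K1 by (subst ln_le_cancel_iff) auto
  then have lK: "1 \<le> ln K" by simp
  have lK0: "0 \<le> ln K" using lK by linarith
  have b1: "(ln H - ln K) / (K - 1) \<le> 2"
  proof -
    have "ln H - ln K \<le> K" unfolding K_def using lK0 K_def by simp
    also have "K \<le> 2 * (K - 1)" using K1 by (simp add: algebra_simps)
    finally show ?thesis using K1 by (simp add: divide_le_eq)
  qed
  show "MBRev_ERC H \<le> ereal (4 * ln (ln H))"
    unfolding MBRev_ERC_def
  proof (rule SUP_least)
    fix x assume "x \<in> {x. erc_feasible H x}"
    then have "erc_mb_rev H x \<le> (ln H - ln K) / (K - 1) + ln K + 1"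
      using main_bound[OF K1(1) KH] by simp
    also have "\<dots> \<le> 4 * ln (ln H)" using b1 lK unfolding K_def by linarith
    finally show "ereal (erc_mb_rev H x) \<le> ereal (4 * ln (ln H))" by simp
  qed
qed

end
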